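(* Let $r\geq 3$. If a $2$-connected $r$-graph $G$ has a $2$-vertex-cut, then either $G$ has a non-trivial tight edge-cut or the underlying simple graph $G_s$ is a circuit of length $4$.
   Context: Graphs are finite, may have parallel edges but no loops. $\partial_G(X)$ is the set of edges with exactly one end in $X\subseteq V(G)$. An $r$-graph is an $r$-regular graph $G$ with $|\partial_G(X)|\geq r$ for every $X\subseteq V(G)$ of odd cardinality. An edge-cut $\partial_G(X)$ of an $r$-graph $G$ is a non-trivial tight edge-cut if $|X|$ is odd, $|\partial_G(X)|=r$, and $|X|>1$ and $|V(G)\setminus X|>1$. $G_s$ is the underlying simple graph of $G$. A $2$-vertex-cut is a set of $2$ vertices whose removal increases the number of components. *)

theory Defs
  imports Main
begin

text \<open>Parallel edges are distinct elements of E with equal ends.\<close>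

definition multigraph :: "'a set \<Rightarrow> 'e set \<Rightarrow> ('e \<Rightarrow> 'a set) \<Rightarrow> bool" where
  "multigraph V E ends \<longleftrightarrow> finite V \<and> finite E \<and>
     (\<forall>e\<in>E. ends e \<subseteq> V \<and> card (ends e) = 2)"

definition degree :: "'e set \<Rightarrow> ('e \<Rightarrow> 'a set) \<Rightarrow> 'a \<Rightarrow> nat" where
  "degree E ends v = card {e\<in>E. v \<in> ends e}"

definition edge_cut :: "'e set \<Rightarrow> ('e \<Rightarrow> 'a set) \<Rightarrow> 'a set \<Rightarrow> 'e set" where
  "edge_cut E ends X = {e\<in>E. card (ends e \<inter> X) = 1}"

definition r_graph :: "nat \<Rightarrow> 'a set \<Rightarrow> 'e set \<Rightarrow> ('e \<Rightarrow> 'a set) \<Rightarrow> bool" where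
  "r_graph r V E ends \<longleftrightarrow> multigraph V E ends \<and>
     (\<forall>v\<in>V. degree E ends v = r) \<and>
     (\<forall>X. X \<subseteq> V \<and> odd (card X) \<longrightarrow> card (edge_cut E ends X) \<ge> r)"

definition nontrivial_tight_cut ::
  "nat \<Rightarrow> 'a set \<Rightarrow> 'e set \<Rightarrow> ('e \<Rightarrow> 'a set) \<Rightarrow> 'a set \<Rightarrow> bool" where
  "nontrivial_tight_cut r V E ends X \<longleftrightarrow> X \<subseteq> V \<and> odd (card X) \<and>
     card (edge_cut E ends X) = r \<and> card X > 1 \<and> card (V - X) > 1"

definition adj_in :: "'e set \<Rightarrow> ('e \<Rightarrow> 'a set) \<Rightarrow> 'a set \<Rightarrow> 'a \<Rightarrow> 'a \<Rightarrow> bool" where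
  "adj_in E ends W u v \<longleftrightarrow> u \<in> W \<and> v \<in> W \<and> (\<exists>e\<in>E. ends e = {u, v})"

definition reach_in :: "'e set \<Rightarrow> ('e \<Rightarrow> 'a set) \<Rightarrow> 'a set \<Rightarrow> 'a \<Rightarrow> 'a \<Rightarrow> bool" where
  "reach_in E ends W = (adj_in E ends W)\<^sup>*\<^sup>*"

definition num_components :: "'e set \<Rightarrow> ('e \<Rightarrow> 'a set) \<Rightarrow> 'a set \<Rightarrow> nat" where
  "num_components E ends W = card ((\<lambda>v. {u. reach_in E ends W v u}) ` W)"

definition connected_in :: "'e set \<Rightarrow> ('e \<Rightarrow> 'a set) \<Rightarrow> 'a set \<Rightarrow> bool" where
  "connected_in E ends W \<longleftrightarrow> num_components E ends W = 1"

text \<open>2-connected (Diestel): more than 2 vertices and G - X connected whenever |X| < 2.\<close>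
definition two_connected :: "'a set \<Rightarrow> 'e set \<Rightarrow> ('e \<Rightarrow> 'a set) \<Rightarrow> bool" where
  "two_connected V E ends \<longleftrightarrow> card V > 2 \<and>
     (\<forall>X. X \<subseteq> V \<and> card X < 2 \<longrightarrow> connected_in E ends (V - X))"

definition two_vertex_cut :: "'a set \<Rightarrow> 'e set \<Rightarrow> ('e \<Rightarrow> 'a set) \<Rightarrow> 'a set \<Rightarrow> bool" where
  "two_vertex_cut V E ends S \<longleftrightarrow> S \<subseteq> V \<and> card S = 2 \<and>
     num_components E ends (V - S) > num_components E ends V"

definition simple_adj :: "'e set \<Rightarrow> ('e \<Rightarrow> 'a set) \<Rightarrow> 'a \<Rightarrow> 'a \<Rightarrow> bool" where
  "simple_adj E ends u v \<longleftrightarrow> (\<exists>e\<in>E. ends e = {u, v})"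

definition underlying_is_C4 :: "'a set \<Rightarrow> 'e set \<Rightarrow> ('e \<Rightarrow> 'a set) \<Rightarrow> bool" where
  "underlying_is_C4 V E ends \<longleftrightarrow> (\<exists>a b c d. distinct [a, b, c, d] \<and> V = {a, b, c, d} \<and>
     {{u, v} | u v. simple_adj E ends u v} = {{a, b}, {b, c}, {c, d}, {d, a}})"

end

theory Submission
  imports Defs
begin


lemma reach_closed:
  assumes "reach_in E ends W v q" "v \<in> T"
    and "\<And>p q. adj_in E ends W p q \<Longrightarrow> p \<in> T \<Longrightarrow> q \<in> T"
  shows "q \<in> T"
  using assms(1) unfolding reach_in_def
  by (induction rule: rtranclp_induct) (use assms in auto)

lemma reach_sym:
  assumes "reach_in E ends W v q" shows "reach_in E ends W q v"
proof -
  have "symp (adj_in E ends W)" by (auto simp: symp_def adj_in_def insert_commute)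
  then show ?thesis using assms unfolding reach_in_def by (meson sympD symp_rtranclp)
qed

lemma two_comps:
  assumes "finite W" "v \<in> W" "z \<in> W" "\<not> reach_in E ends W v z"
  shows "\<not> connected_in E ends W"
proof -
  let ?f = "\<lambda>v. {u. reach_in E ends W v u}"
  have "z \<in> ?f z" by (simp add: reach_in_def)
  moreover have "z \<notin> ?f v" using assms by simp
  ultimately have "?f v \<noteq> ?f z" by blast
  moreover have "?f v \<in> ?f ` W" "?f z \<in> ?f ` W" using assms by auto
  moreover have "finite (?f ` W)" using assms by simp
  ultimately have "card {?f v, ?f z} \<le> card (?f ` W)"
    by (intro card_mono) auto
  moreover have "card {?f v, ?f z} = 2" using \<open>?f v \<noteq> ?f z\<close> by simp
  ultimately have "card (?f ` W) \<ge> 2" by simp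
  then show ?thesis by (simp add: connected_in_def num_components_def)
qed

lemma card_pair_int: "p \<noteq> q \<Longrightarrow> card ({p,q} \<inter> X) = 1 \<longleftrightarrow> (p \<in> X \<longleftrightarrow> q \<notin> X)"
  by (cases "p \<in> X"; cases "q \<in> X") auto



lemma classify:
  assumes "p \<noteq> q" "x \<noteq> y" "x \<notin> C1" "x \<notin> C2" "y \<notin> C1" "y \<notin> C2" "C1 \<inter> C2 = {}"
    and "p \<in> C1 \<or> p \<in> C2 \<or> p = x \<or> p = y" "q \<in> C1 \<or> q \<in> C2 \<or> q = x \<or> q = y"
    and "\<not> (p \<in> C1 \<and> q \<in> C2)" "\<not> (p \<in> C2 \<and> q \<in> C1)"
    and A1: "a1 \<longleftrightarrow> x \<in> {p,q} \<and> {p,q} \<inter> C1 \<noteq> {}"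
    and A2: "a2 \<longleftrightarrow> y \<in> {p,q} \<and> {p,q} \<inter> C1 \<noteq> {}"
    and A3: "a3 \<longleftrightarrow> x \<in> {p,q} \<and> {p,q} \<inter> C2 \<noteq> {}"
    and A4: "a4 \<longleftrightarrow> y \<in> {p,q} \<and> {p,q} \<inter> C2 \<noteq> {}"
    and A5: "a5 \<longleftrightarrow> x \<in> {p,q} \<and> y \<in> {p,q}"
  shows "(x \<in> {p,q} \<longleftrightarrow> a1 \<or> a3 \<or> a5) \<and> (y \<in> {p,q} \<longleftrightarrow> a2 \<or> a4 \<or> a5) \<and> (card ({p,q} \<inter> C1) = 1 \<longleftrightarrow> a1 \<or> a2) \<and> (card ({p,q} \<inter> C2) = 1 \<longleftrightarrow> a3 \<or> a4) \<and> (card ({p,q} \<inter> insert x C1) = 1 \<longleftrightarrow> a2 \<or> a3 \<or> a5) \<and> (card ({p,q} \<inter> insert y C1) = 1 \<longleftrightarrow> a1 \<or> a4 \<or> a5) \<and> (\<not> (a1 \<and> a2)) \<and> (\<not> (a1 \<and> a3)) \<and> (\<not> (a1 \<and> a4)) \<and> (\<not> (a1 \<and> a5)) \<and> (\<not> (a2 \<and> a3)) \<and> (\<not> (a2 \<and> a4)) \<and> (\<not> (a2 \<and> a5)) \<and> (\<not> (a3 \<and> a4)) \<and> (\<not> (a3 \<and> a5)) \<and> (\<not> (a4 \<and> a5))"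
  using assms(8,9)
proof (elim disjE)
qed (use assms(1-7,10,11) A1 A2 A3 A4 A5 in \<open>auto simp: card_pair_int\<close>)

lemma core:
  assumes r3: "r \<ge> 3" and mg: "multigraph V E ends"
    and deg: "\<forall>v\<in>V. degree E ends v = r"
    and cutc: "\<forall>X. X \<subseteq> V \<and> odd (card X) \<longrightarrow> card (edge_cut E ends X) \<ge> r"
    and VV: "V = C1 \<union> C2 \<union> {x,y}" and xy: "x \<noteq> y" "x \<notin> C1" "x \<notin> C2" "y \<notin> C1" "y \<notin> C2"
    and dj: "C1 \<inter> C2 = {}"
    and ne: "C1 \<noteq> {}" "C2 \<noteq> {}"
    and noedge: "\<forall>e\<in>E. \<not> (ends e \<inter> C1 \<noteq> {} \<and> ends e \<inter> C2 \<noteq> {})"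
    and conn: "connected_in E ends (V - {x})" "connected_in E ends (V - {y})"
  shows "(\<exists>X. nontrivial_tight_cut r V E ends X) \<or> underlying_is_C4 V E ends"
proof -
  have fV: "finite V" and fE: "finite E" using mg by (auto simp: multigraph_def)
  have fC1: "finite C1" and fC2: "finite C2" using fV VV by auto
  have pair: "\<exists>p q. ends e = {p,q} \<and> p \<noteq> q \<and> p \<in> V \<and> q \<in> V" if "e \<in> E" for e
  proof -
    have "card (ends e) = 2" "ends e \<subseteq> V" using mg that unfolding multigraph_def by auto
    from this(1) obtain p q where pq: "ends e = {p,q}" "p \<noteq> q" by (auto simp: card_2_iff)
    with \<open>ends e \<subseteq> V\<close> have "p \<in> V" "q \<in> V" by auto
    with pq show ?thesis by blast
  qed
  define P1 where "P1 = {e\<in>E. x \<in> ends e \<and> ends e \<inter> C1 \<noteq> {}}"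
  define P2 where "P2 = {e\<in>E. y \<in> ends e \<and> ends e \<inter> C1 \<noteq> {}}"
  define P3 where "P3 = {e\<in>E. x \<in> ends e \<and> ends e \<inter> C2 \<noteq> {}}"
  define P4 where "P4 = {e\<in>E. y \<in> ends e \<and> ends e \<inter> C2 \<noteq> {}}"
  define P5 where "P5 = {e\<in>E. x \<in> ends e \<and> y \<in> ends e}"
  have fin: "finite P1" "finite P2" "finite P3" "finite P4" "finite P5"
    using fE by (auto simp: P1_def P2_def P3_def P4_def P5_def)
  have sub: "P1 \<subseteq> E" "P2 \<subseteq> E" "P3 \<subseteq> E" "P4 \<subseteq> E" "P5 \<subseteq> E"
    by (auto simp: P1_def P2_def P3_def P4_def P5_def)
  have edgefacts: "(e \<in> {e\<in>E. x \<in> ends e} \<longleftrightarrow> e \<in> P1 \<union> P3 \<union> P5) \<and>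
        (e \<in> {e\<in>E. y \<in> ends e} \<longleftrightarrow> e \<in> P2 \<union> P4 \<union> P5) \<and>
        (e \<in> edge_cut E ends C1 \<longleftrightarrow> e \<in> P1 \<union> P2) \<and>
        (e \<in> edge_cut E ends C2 \<longleftrightarrow> e \<in> P3 \<union> P4) \<and>
        (e \<in> edge_cut E ends (insert x C1) \<longleftrightarrow> e \<in> P2 \<union> P3 \<union> P5) \<and>
        (e \<in> edge_cut E ends (insert y C1) \<longleftrightarrow> e \<in> P1 \<union> P4 \<union> P5) \<and>
        \<not> (e \<in> P1 \<and> e \<in> P2) \<and> \<not> (e \<in> P1 \<and> e \<in> P3) \<and> \<not> (e \<in> P1 \<and> e \<in> P4) \<and>
        \<not> (e \<in> P1 \<and> e \<in> P5) \<and> \<not> (e \<in> P2 \<and> e \<in> P3) \<and> \<not> (e \<in> P2 \<and> e \<in> P4) \<and>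
        \<not> (e \<in> P2 \<and> e \<in> P5) \<and> \<not> (e \<in> P3 \<and> e \<in> P4) \<and> \<not> (e \<in> P3 \<and> e \<in> P5) \<and>
        \<not> (e \<in> P4 \<and> e \<in> P5)" if eE: "e \<in> E" for e
  proof -
    obtain p q where pq: "ends e = {p,q}" "p \<noteq> q" "p \<in> V" "q \<in> V" using pair eE by blast
    have pc: "p \<in> C1 \<or> p \<in> C2 \<or> p = x \<or> p = y" "q \<in> C1 \<or> q \<in> C2 \<or> q = x \<or> q = y"
      using pq VV by auto
    have ne1: "\<not> (p \<in> C1 \<and> q \<in> C2)" "\<not> (p \<in> C2 \<and> q \<in> C1)"
      using noedge eE pq by auto
    have A1: "e \<in> P1 \<longleftrightarrow> x \<in> {p,q} \<and> {p,q} \<inter> C1 \<noteq> {}" unfolding P1_def using eE pq(1) by simp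
    have A2: "e \<in> P2 \<longleftrightarrow> y \<in> {p,q} \<and> {p,q} \<inter> C1 \<noteq> {}" unfolding P2_def using eE pq(1) by simp
    have A3: "e \<in> P3 \<longleftrightarrow> x \<in> {p,q} \<and> {p,q} \<inter> C2 \<noteq> {}" unfolding P3_def using eE pq(1) by simp
    have A4: "e \<in> P4 \<longleftrightarrow> y \<in> {p,q} \<and> {p,q} \<inter> C2 \<noteq> {}" unfolding P4_def using eE pq(1) by simp
    have A5: "e \<in> P5 \<longleftrightarrow> x \<in> {p,q} \<and> y \<in> {p,q}" unfolding P5_def using eE pq(1) by simp
    note cl = classify[OF pq(2) xy dj pc ne1 A1 A2 A3 A4 A5]
    have mx: "e \<in> {e\<in>E. x \<in> ends e} \<longleftrightarrow> x \<in> {p,q}" "e \<in> {e\<in>E. y \<in> ends e} \<longleftrightarrow> y \<in> {p,q}"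
      using eE pq(1) by simp_all
    have mc: "e \<in> edge_cut E ends X \<longleftrightarrow> card ({p,q} \<inter> X) = 1" for X
      unfolding edge_cut_def using eE pq(1) by simp
    show ?thesis unfolding mx mc Un_iff using cl by blast
  qed
  have disj: "P1 \<inter> P2 = {}" "P1 \<inter> P3 = {}" "P1 \<inter> P4 = {}" "P1 \<inter> P5 = {}"
     "P2 \<inter> P3 = {}" "P2 \<inter> P4 = {}" "P2 \<inter> P5 = {}" "P3 \<inter> P4 = {}" "P3 \<inter> P5 = {}"
     "P4 \<inter> P5 = {}"
    using sub edgefacts by blast+
  have cutE: "edge_cut E ends X \<subseteq> E" for X by (auto simp: edge_cut_def)
  have eq: "{e\<in>E. x \<in> ends e} = P1 \<union> P3 \<union> P5"
     "{e\<in>E. y \<in> ends e} = P2 \<union> P4 \<union> P5"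
     "edge_cut E ends C1 = P1 \<union> P2"
     "edge_cut E ends C2 = P3 \<union> P4"
     "edge_cut E ends (insert x C1) = P2 \<union> P3 \<union> P5"
     "edge_cut E ends (insert y C1) = P1 \<union> P4 \<union> P5"
    using sub edgefacts cutE by blast+
  have dx: "card P1 + card P3 + card P5 = r"
    using deg VV eq(1) fin disj unfolding degree_def
    by (simp add: card_Un_disjoint Int_Un_distrib2)
  have dy: "card P2 + card P4 + card P5 = r"
    using deg VV eq(2) fin disj unfolding degree_def
    by (simp add: card_Un_disjoint Int_Un_distrib2)
  have c1: "card (edge_cut E ends C1) = card P1 + card P2"
    using eq fin disj by (simp add: card_Un_disjoint)
  have c2: "card (edge_cut E ends C2) = card P3 + card P4"
    using eq fin disj by (simp add: card_Un_disjoint)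
  have c3: "card (edge_cut E ends (insert x C1)) = card P2 + card P3 + card P5"
    using eq fin disj by (simp add: card_Un_disjoint Int_Un_distrib2)
  have c4: "card (edge_cut E ends (insert y C1)) = card P1 + card P4 + card P5"
    using eq fin disj by (simp add: card_Un_disjoint Int_Un_distrib2)
  have cardV: "card V = card C1 + card C2 + 2"
    using VV xy dj fC1 fC2 by (simp add: card_Un_disjoint)
  have evenV: "even (card V)"
  proof (rule ccontr)
    assume "odd (card V)"
    then have "card (edge_cut E ends V) \<ge> r" using cutc by blast
    moreover have "edge_cut E ends V = {}"
    proof -
      { fix e assume "e \<in> E"
        then obtain p q where pq: "ends e = {p,q}" "p \<noteq> q" "p \<in> V" "q \<in> V" using pair by blast
        then have "e \<notin> edge_cut E ends V" by (simp add: edge_cut_def card_pair_int) }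
      then show ?thesis by (auto simp: edge_cut_def)
    qed
    ultimately show False using r3 by simp
  qed
  show ?thesis
  proof (cases "odd (card C1)")
    case True
    then have o2: "odd (card C2)" using evenV cardV by simp
    have "C1 \<subseteq> V" "C2 \<subseteq> V" using VV by auto
    then have "card (edge_cut E ends C1) \<ge> r" "card (edge_cut E ends C2) \<ge> r"
      using cutc[rule_format, of C1] cutc[rule_format, of C2] True o2 by auto
    then have t1: "card (edge_cut E ends C1) = r" and t2: "card (edge_cut E ends C2) = r"
      and p5: "card P5 = 0" using c1 c2 dx dy by linarith+
    have P5e: "P5 = {}" using p5 fin by simp
    have VC1: "V - C1 = C2 \<union> {x,y}" and VC2: "V - C2 = C1 \<union> {x,y}" using VV xy dj by auto
    have cVC1: "card (V - C1) > 1" unfolding VC1 using fC2 xy ne by (simp add: card_Un_disjoint)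
    have cVC2: "card (V - C2) > 1" unfolding VC2 using fC1 xy ne by (simp add: card_Un_disjoint)
    show ?thesis
    proof (cases "card C1 > 1")
      case True
      have "nontrivial_tight_cut r V E ends C1"
        unfolding nontrivial_tight_cut_def using t1 cVC1 \<open>odd (card C1)\<close> VV True by auto
      then show ?thesis by blast
    next
      case F1: False
      show ?thesis
      proof (cases "card C2 > 1")
        case True
        have "nontrivial_tight_cut r V E ends C2"
          unfolding nontrivial_tight_cut_def using t2 cVC2 o2 VV True by auto
        then show ?thesis by blast
      next
        case False
        have "card C1 \<noteq> 0" "card C2 \<noteq> 0" using ne fC1 fC2 by auto
        then have "card C1 = 1" "card C2 = 1" using False F1 by linarith+
        obtain u where u: "C1 = {u}" using \<open>card C1 = 1\<close> by (rule card_1_singletonE)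
        obtain w where w: "C2 = {w}" using \<open>card C2 = 1\<close> by (rule card_1_singletonE)
        have uw: "u \<noteq> w" using u w dj by auto
        have adj: "\<exists>e\<in>E. ends e = {z,s}"
          if z: "z \<in> {u,w}" and s: "s \<in> {x,y}" and t: "t \<in> {x,y}" and st: "s \<noteq> t" for z s t
        proof (rule ccontr)
          assume nadj: "\<not> (\<exists>e\<in>E. ends e = {z,s})"
          let ?W = "V - {t}"
          have "z \<in> ?W" "s \<in> ?W" using z s t st VV u w xy by auto
          moreover have "\<not> reach_in E ends ?W z s"
          proof
            assume "reach_in E ends ?W z s"
            then have "s \<in> {z}"
            proof (rule reach_closed)
              fix p q assume a: "adj_in E ends ?W p q" "p \<in> {z}"
              then obtain e where e: "e \<in> E" "ends e = {z,q}" "q \<in> ?W" by (auto simp: adj_in_def)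
              have "q \<noteq> s" using nadj e by auto
              moreover have "\<not> (z \<in> C1 \<and> q \<in> C2)" "\<not> (z \<in> C2 \<and> q \<in> C1)"
                using noedge e by auto
              ultimately show "q \<in> {z}" using e(3) VV u w z s t st by auto
            qed simp
            then show False using z s u w xy by auto
          qed
          moreover have "finite ?W" using fV by simp
          ultimately have "\<not> connected_in E ends ?W" by (intro two_comps)
          then show False using conn t by auto
        qed
        have "underlying_is_C4 V E ends"
          unfolding underlying_is_C4_def
        proof (intro exI conjI)
          show "distinct [u, x, w, y]" using u w uw xy by auto
          show "V = {u, x, w, y}" using VV u w by auto
          show "{{p, q} |p q. simple_adj E ends p q} = {{u, x}, {x, w}, {w, y}, {y, u}}"
          proof
            show "{{p, q} |p q. simple_adj E ends p q} \<subseteq> {{u, x}, {x, w}, {w, y}, {y, u}}"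
            proof
              fix S assume "S \<in> {{p, q} |p q. simple_adj E ends p q}"
              then obtain p q e where S: "S = {p,q}" "e \<in> E" "ends e = {p,q}"
                by (auto simp: simple_adj_def)
              obtain p' q' where pq: "ends e = {p',q'}" "p' \<noteq> q'" "p' \<in> V" "q' \<in> V"
                using pair S by blast
              have "e \<notin> P5" using P5e by auto
              then have n5: "\<not> (x \<in> ends e \<and> y \<in> ends e)" using S by (auto simp: P5_def)
              have n12: "\<not> (u \<in> ends e \<and> w \<in> ends e)" using noedge S u w by auto
              have "p' = u \<or> p' = w \<or> p' = x \<or> p' = y" "q' = u \<or> q' = w \<or> q' = x \<or> q' = y"
                using pq VV u w by auto
              moreover have "S = {p',q'}" using S pq by simp
              ultimately show "S \<in> {{u, x}, {x, w}, {w, y}, {y, u}}"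
                using pq(1,2) n5 n12 by (elim disjE) (simp_all add: doubleton_eq_iff)
            qed
            show "{{u, x}, {x, w}, {w, y}, {y, u}} \<subseteq> {{p, q} |p q. simple_adj E ends p q}"
            proof -
              have c1: "{w,x} = {x,w}" "{u,y} = {y,u}" by (rule insert_commute)+
              have "simple_adj E ends u x" "simple_adj E ends x w" "simple_adj E ends w y"
                "simple_adj E ends y u"
                using adj[of u x y] adj[of w x y] adj[of w y x] adj[of u y x] xy(1)
                unfolding simple_adj_def c1 by simp_all
              then show ?thesis by blast
            qed
          qed
        qed
        then show ?thesis by blast
      qed
    qed
  next
    case False
    have "card (insert x C1) = card C1 + 1" "card (insert y C1) = card C1 + 1"
      using fC1 xy by auto
    then have oo: "odd (card (insert x C1))" "odd (card (insert y C1))" using False by auto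
    have "insert x C1 \<subseteq> V" "insert y C1 \<subseteq> V" using VV by auto
    then have "card (edge_cut E ends (insert x C1)) \<ge> r" "card (edge_cut E ends (insert y C1)) \<ge> r"
      using cutc[rule_format, of "insert x C1"] cutc[rule_format, of "insert y C1"] oo by auto
    then have t: "card (edge_cut E ends (insert x C1)) = r" using c3 c4 dx dy by linarith
    have "card C1 \<ge> 1" using ne fC1 by (simp add: Suc_leI card_gt_0_iff)
    then have cX: "card (insert x C1) > 1" using fC1 xy by simp
    have "V - insert x C1 = insert y C2" using VV xy dj by auto
    then have cV: "card (V - insert x C1) > 1" using fC2 ne xy by (simp add: card_gt_0_iff)
    have "odd (card (insert x C1))" using False fC1 xy by simp
    then have "nontrivial_tight_cut r V E ends (insert x C1)"
      unfolding nontrivial_tight_cut_def using t cX cV VV by auto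
    then show ?thesis by blast
  qed
qed


theorem lemma2p5:
  fixes r :: nat and V :: "'a set" and E :: "'e set" and ends :: "'e \<Rightarrow> 'a set"
  assumes "r \<ge> 3"
    and "r_graph r V E ends"
    and "two_connected V E ends"
    and "\<exists>S. two_vertex_cut V E ends S"
  shows "(\<exists>X. nontrivial_tight_cut r V E ends X) \<or> underlying_is_C4 V E ends"
proof -
  have mg: "multigraph V E ends" and deg: "\<forall>v\<in>V. degree E ends v = r"
    and cutc: "\<forall>X. X \<subseteq> V \<and> odd (card X) \<longrightarrow> card (edge_cut E ends X) \<ge> r"
    using assms(2) by (auto simp: r_graph_def)
  have fV: "finite V" using mg by (simp add: multigraph_def)
  have tc: "\<And>X. X \<subseteq> V \<Longrightarrow> card X < 2 \<Longrightarrow> connected_in E ends (V - X)"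
    using assms(3) by (auto simp: two_connected_def)
  obtain S where S: "two_vertex_cut V E ends S" using assms(4) by blast
  then have SV: "S \<subseteq> V" and cS: "card S = 2"
    and nc: "num_components E ends (V - S) > num_components E ends V"
    by (auto simp: two_vertex_cut_def)
  obtain x y where xy: "S = {x,y}" "x \<noteq> y" using cS by (meson card_2_iff)
  have "connected_in E ends (V - {})" using tc[of "{}"] by simp
  then have "num_components E ends V = 1" by (simp add: connected_in_def)
  with nc have nc2: "card ((\<lambda>v. {u. reach_in E ends (V - S) v u}) ` (V - S)) > 1"
    by (simp add: num_components_def)
  let ?W = "V - S"
  let ?f = "\<lambda>v. {u. reach_in E ends ?W v u}"
  obtain v v' where vv: "v \<in> ?W" "v' \<in> ?W" "?f v \<noteq> ?f v'"
  proof -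
    have fin: "finite (?f ` ?W)" using fV by simp
    have "\<not> card (?f ` ?W) \<le> Suc 0" using nc2 by simp
    then have "\<not> (\<forall>a\<in>?f ` ?W. \<forall>b\<in>?f ` ?W. a = b)" using card_le_Suc0_iff_eq[OF fin] by blast
    then obtain a b where "a \<in> ?W" "b \<in> ?W" "?f a \<noteq> ?f b" by blast
    then show ?thesis using that by blast
  qed
  define C1 where "C1 = ?f v"
  define C2 where "C2 = ?W - C1"
  have C1W: "C1 \<subseteq> ?W"
  proof
    fix q assume "q \<in> C1"
    then have "reach_in E ends ?W v q" by (simp add: C1_def)
    then show "q \<in> ?W" by (rule reach_closed) (use vv in \<open>auto simp: adj_in_def\<close>)
  qed
  have vC1: "v \<in> C1" by (simp add: C1_def reach_in_def)
  have v'C2: "v' \<in> C2"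
  proof -
    have "\<not> reach_in E ends ?W v v'"
    proof
      assume h: "reach_in E ends ?W v v'"
      have "?f v = ?f v'"
      proof (intro set_eqI iffI; simp)
        fix u assume "reach_in E ends ?W v u"
        then show "reach_in E ends ?W v' u" using reach_sym[OF h] unfolding reach_in_def by auto
      next
        fix u assume "reach_in E ends ?W v' u"
        then show "reach_in E ends ?W v u" using h unfolding reach_in_def by auto
      qed
      then show False using vv by simp
    qed
    then show ?thesis using vv by (simp add: C2_def C1_def)
  qed
  have noedge: "\<forall>e\<in>E. \<not> (ends e \<inter> C1 \<noteq> {} \<and> ends e \<inter> C2 \<noteq> {})"
  proof (intro ballI notI)
    fix e assume e: "e \<in> E" and h: "ends e \<inter> C1 \<noteq> {} \<and> ends e \<inter> C2 \<noteq> {}"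
    then obtain p q where p: "p \<in> ends e" "p \<in> C1" and q: "q \<in> ends e" "q \<in> C2" by blast
    have "p \<noteq> q" using p q by (auto simp: C2_def)
    have "card (ends e) = 2" using mg e by (simp add: multigraph_def)
    then obtain a b where ab: "ends e = {a,b}" "a \<noteq> b" by (auto simp: card_2_iff)
    then have "ends e = {p,q}" using p q \<open>p \<noteq> q\<close> by auto
    then have "adj_in E ends ?W p q" using e p q C1W by (auto simp: adj_in_def C2_def)
    moreover have "reach_in E ends ?W v p" using p by (simp add: C1_def)
    ultimately have "reach_in E ends ?W v q" unfolding reach_in_def by auto
    then show False using q by (simp add: C1_def C2_def)
  qed
  show ?thesis
  proof (rule core[OF assms(1) mg deg cutc _ xy(2) _ _ _ _ _ _ _ noedge])
    show "V = C1 \<union> C2 \<union> {x, y}" using C1W SV xy by (auto simp: C2_def)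
    show "x \<notin> C1" "x \<notin> C2" "y \<notin> C1" "y \<notin> C2" using C1W xy by (auto simp: C2_def)
    show "C1 \<inter> C2 = {}" by (auto simp: C2_def)
    show "C1 \<noteq> {}" "C2 \<noteq> {}" using vC1 v'C2 by auto
    show "connected_in E ends (V - {x})" "connected_in E ends (V - {y})"
      using tc[of "{x}"] tc[of "{y}"] SV xy by auto
  qed
qed

end
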